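(* Let $K\ge 2$, $M,N,d$ be positive integers with $d\le\min(M,N)$. If the symmetric system $(M\times N,d)^K$ is proper, then $$\frac{dK}{\min(M,N)}\le 1+\frac{\max(M,N)}{\min(M,N)}-\frac{d}{\min(M,N)}.$$
   Context: A $K$-user MIMO interference system $\Pi_{k=1}^K(M^{[k]}\times N^{[k]},d^{[k]})$ is specified by positive integers $M^{[k]}$, $N^{[k]}$ and $d^{[k]}\le\min(M^{[k]},N^{[k]})$, $k\in\mathcal{K}=\{1,\dots,K\}$; the symmetric system $(M\times N,d)^K$ has $M^{[k]}=M$, $N^{[k]}=N$, $d^{[k]}=d$ for all $k$. Its variables are: for each $j\in\mathcal K$ and $n\in\{1,\dots,d^{[j]}\}$ a set $T_{j,n}$ of $M^{[j]}-d^{[j]}$ variables, and for each $k\in\mathcal K$, $m\in\{1,\dots,d^{[k]}\}$ a set $R_{k,m}$ of $N^{[k]}-d^{[k]}$ variables, all pairwise disjoint. The equations are $E^{kj}_{mn}$ for $j,k\in\mathcal K$, $k\ne j$, $m\le d^{[k]}$, $n\le d^{[j]}$, forming the set $\mathcal E$, with $\mathrm{var}(E^{kj}_{mn})=T_{j,n}\cup R_{k,m}$. The system is proper if for every $S\subseteq\mathcal E$, $|S|\le\left|\bigcup_{E\in S}\mathrm{var}(E)\right|$. *)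

theory Defs
  imports Complex_Main
begin

text \<open>A K-user MIMO interference system is given by K and functions
  Ms, Ns, ds : users (indexed 1..K) to positive integers.
  Variables: VT j n i is the i-th variable of T_{j,n} (i < M_j - d_j);
  VR k m i is the i-th variable of R_{k,m} (i < N_k - d_k).
  Equations E^{kj}_{mn} are represented by tuples (k, j, m, n).\<close>

datatype ivar = VT nat nat nat | VR nat nat nat

definition Tset :: "(nat \<Rightarrow> nat) \<Rightarrow> (nat \<Rightarrow> nat) \<Rightarrow> nat \<Rightarrow> nat \<Rightarrow> ivar set" where
  "Tset Ms ds j n = {VT j n i | i. i < Ms j - ds j}"

definition Rset :: "(nat \<Rightarrow> nat) \<Rightarrow> (nat \<Rightarrow> nat) \<Rightarrow> nat \<Rightarrow> nat \<Rightarrow> ivar set" where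
  "Rset Ns ds k m = {VR k m i | i. i < Ns k - ds k}"

definition equations :: "nat \<Rightarrow> (nat \<Rightarrow> nat) \<Rightarrow> (nat \<times> nat \<times> nat \<times> nat) set" where
  "equations K ds = {(k, j, m, n) | k j m n.
      k \<in> {1..K} \<and> j \<in> {1..K} \<and> k \<noteq> j \<and> m \<in> {1..ds k} \<and> n \<in> {1..ds j}}"

fun var_of :: "(nat \<Rightarrow> nat) \<Rightarrow> (nat \<Rightarrow> nat) \<Rightarrow> (nat \<Rightarrow> nat) \<Rightarrow> nat \<times> nat \<times> nat \<times> nat \<Rightarrow> ivar set" where
  "var_of Ms Ns ds (k, j, m, n) = Tset Ms ds j n \<union> Rset Ns ds k m"

definition proper :: "nat \<Rightarrow> (nat \<Rightarrow> nat) \<Rightarrow> (nat \<Rightarrow> nat) \<Rightarrow> (nat \<Rightarrow> nat) \<Rightarrow> bool" where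
  "proper K Ms Ns ds \<longleftrightarrow>
     (\<forall>S \<subseteq> equations K ds. card S \<le> card (\<Union>E\<in>S. var_of Ms Ns ds E))"

end

theory Submission
  imports Defs
begin

lemma eq_card:
  "card (equations K (\<lambda>_. d)) = K * (K - 1) * (d * d)"
proof -
  define D where "D = Sigma {1..K} (\<lambda>k. {1..K} - {k})"
  have e: "equations K (\<lambda>_. d) = (\<lambda>((k,j),(m,n)). (k,j,m,n)) ` (D \<times> ({1..d}\<times>{1..d}))"
    unfolding equations_def D_def by (auto simp: image_iff)
  have inj: "inj_on (\<lambda>((k,j),(m,n)). (k,j,m,n)) (D \<times> ({1..d}\<times>{1..d}))"
    by (auto simp: inj_on_def)
  have cD: "card D = K * (K - 1)"
    unfolding D_def by (subst card_SigmaI) auto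
  show ?thesis unfolding e card_image[OF inj] card_cartesian_product cD by simp
qed

lemma var_union:
  assumes "K \<ge> 2"
  shows "(\<Union>E\<in>equations K (\<lambda>_. d). var_of (\<lambda>_. M) (\<lambda>_. N) (\<lambda>_. d) E)
     = (\<lambda>(j,n,i). VT j n i) ` ({1..K}\<times>{1..d}\<times>{..<M-d})
       \<union> (\<lambda>(j,n,i). VR j n i) ` ({1..K}\<times>{1..d}\<times>{..<N-d})"
proof (rule set_eqI)
  fix x
  show "x \<in> (\<Union>E\<in>equations K (\<lambda>_. d). var_of (\<lambda>_. M) (\<lambda>_. N) (\<lambda>_. d) E) \<longleftrightarrow>
    x \<in> (\<lambda>(j,n,i). VT j n i) ` ({1..K}\<times>{1..d}\<times>{..<M-d})
       \<union> (\<lambda>(j,n,i). VR j n i) ` ({1..K}\<times>{1..d}\<times>{..<N-d})"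
  proof
    assume "x \<in> (\<Union>E\<in>equations K (\<lambda>_. d). var_of (\<lambda>_. M) (\<lambda>_. N) (\<lambda>_. d) E)"
    then obtain k j m n where "(k,j,m,n) \<in> equations K (\<lambda>_. d)"
      "x \<in> var_of (\<lambda>_. M) (\<lambda>_. N) (\<lambda>_. d) (k,j,m,n)" by auto
    then show "x \<in> (\<lambda>(j,n,i). VT j n i) ` ({1..K}\<times>{1..d}\<times>{..<M-d})
       \<union> (\<lambda>(j,n,i). VR j n i) ` ({1..K}\<times>{1..d}\<times>{..<N-d})"
      unfolding equations_def by (auto simp: Tset_def Rset_def image_iff)
  next
    assume "x \<in> (\<lambda>(j,n,i). VT j n i) ` ({1..K}\<times>{1..d}\<times>{..<M-d})
       \<union> (\<lambda>(j,n,i). VR j n i) ` ({1..K}\<times>{1..d}\<times>{..<N-d})"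
    then show "x \<in> (\<Union>E\<in>equations K (\<lambda>_. d). var_of (\<lambda>_. M) (\<lambda>_. N) (\<lambda>_. d) E)"
    proof
      assume "x \<in> (\<lambda>(j,n,i). VT j n i) ` ({1..K}\<times>{1..d}\<times>{..<M-d})"
      then obtain j n i where x: "x = VT j n i" "j \<in> {1..K}" "n \<in> {1..d}" "i < M - d" by auto
      define k :: nat where "k = (if j = 1 then 2 else 1)"
      have "(k,j,n,n) \<in> equations K (\<lambda>_. d)"
        using x assms unfolding equations_def k_def by auto
      moreover have "x \<in> var_of (\<lambda>_. M) (\<lambda>_. N) (\<lambda>_. d) (k,j,n,n)"
        using x by (auto simp: Tset_def)
      ultimately show ?thesis by blast
    next
      assume "x \<in> (\<lambda>(j,n,i). VR j n i) ` ({1..K}\<times>{1..d}\<times>{..<N-d})"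
      then obtain j n i where x: "x = VR j n i" "j \<in> {1..K}" "n \<in> {1..d}" "i < N - d" by auto
      define k :: nat where "k = (if j = 1 then 2 else 1)"
      have "(j,k,n,n) \<in> equations K (\<lambda>_. d)"
        using x assms unfolding equations_def k_def by auto
      moreover have "x \<in> var_of (\<lambda>_. M) (\<lambda>_. N) (\<lambda>_. d) (j,k,n,n)"
        using x by (auto simp: Rset_def)
      ultimately show ?thesis by blast
    qed
  qed
qed

lemma var_card:
  assumes "K \<ge> 2"
  shows "card (\<Union>E\<in>equations K (\<lambda>_. d). var_of (\<lambda>_. M) (\<lambda>_. N) (\<lambda>_. d) E)
     = K * d * (M - d) + K * d * (N - d)"
proof -
  have i1: "inj_on (\<lambda>(j,n,i). VT j n i) ({1..K}\<times>{1..d}\<times>{..<M-d})"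
    by (auto simp: inj_on_def)
  have i2: "inj_on (\<lambda>(j,n,i). VR j n i) ({1..K}\<times>{1..d}\<times>{..<N-d})"
    by (auto simp: inj_on_def)
  have dis: "(\<lambda>(j,n,i). VT j n i) ` ({1..K}\<times>{1..d}\<times>{..<M-d})
       \<inter> (\<lambda>(j,n,i). VR j n i) ` ({1..K}\<times>{1..d}\<times>{..<N-d}) = {}" by auto
  have cA: "card ((\<lambda>(j,n,i). VT j n i) ` ({1..K}\<times>{1..d}\<times>{..<M-d})) = K*d*(M-d)"
    by (simp only: card_image[OF i1] card_cartesian_product) simp
  have cB: "card ((\<lambda>(j,n,i). VR j n i) ` ({1..K}\<times>{1..d}\<times>{..<N-d})) = K*d*(N-d)"
    by (simp only: card_image[OF i2] card_cartesian_product) simp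
  show ?thesis unfolding var_union[OF assms]
    by (subst card_Un_disjoint[OF finite_imageI finite_imageI dis]) (auto simp only: cA cB finite_cartesian_product finite_atLeastAtMost finite_lessThan)
qed

theorem corollary1:
  fixes K M N d :: nat
  assumes "K \<ge> 2" and "M > 0" and "N > 0" and "d > 0" and "d \<le> min M N"
    and "proper K (\<lambda>_. M) (\<lambda>_. N) (\<lambda>_. d)"
  shows "real (d * K) / real (min M N)
           \<le> 1 + real (max M N) / real (min M N) - real d / real (min M N)"
proof -
  have "card (equations K (\<lambda>_. d)) \<le> card (\<Union>E\<in>equations K (\<lambda>_. d). var_of (\<lambda>_. M) (\<lambda>_. N) (\<lambda>_. d) E)"
    using assms(6) unfolding proper_def by blast
  hence "(K * d) * ((K - 1) * d) \<le> (K * d) * ((M - d) + (N - d))"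
    unfolding eq_card var_card[OF assms(1)] by (simp add: algebra_simps)
  hence "(K - 1) * d \<le> (M - d) + (N - d)"
    using assms by (simp add: mult_le_cancel1)
  hence h: "d * K + d \<le> M + N" using assms
    by (cases K) (auto simp: algebra_simps)

  have mm: "real (min M N) + real (max M N) = real M + real N" by (simp add: min_def max_def)
  have pos: "real (min M N) > 0" using assms by simp
  have "real (d*K) \<le> real (min M N) + real (max M N) - real d" using h mm
  proof -
    have "real (d*K) + real d \<le> real M + real N" using h
      by (metis of_nat_add of_nat_le_iff)
    thus ?thesis using mm by linarith
  qed
  hence "real (d*K) / real (min M N) \<le> (real (min M N) + real (max M N) - real d) / real (min M N)"
    using pos by (simp add: divide_right_mono)
  also have "\<dots> = 1 + real (max M N) / real (min M N) - real d / real (min M N)"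
    using pos by (simp add: diff_divide_distrib add_divide_distrib)
  finally show ?thesis .
qed

end
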